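(* Let $L_1=U\oplus A_2$ with $\mathbb{Z}$-basis $e_1,\dots,e_4$ and Gram matrix $$\begin{pmatrix}0&1&0&0\\1&0&0&0\\0&0&-2&-1\\0&0&-1&-2\end{pmatrix}.$$ Let $v_1=(1,-1,0,0)$, $v_2=(0,0,-1,0)$, $v_3=(0,0,0,1)$, $v_4=(0,1,1,-1)$ (coordinates in this basis). Then $\operatorname{O}^+(L_1)$ is generated by the reflections $\sigma_{v_1},\sigma_{v_2},\sigma_{v_3},\sigma_{v_4}$ together with the isometry $(x_1,x_2,x_3,x_4)\mapsto(x_1,x_2,-x_4,-x_3)$.
   Context: For a non-isotropic vector $w$, $\sigma_w(x)=x-\frac{2(x,w)}{(w,w)}w$. The real spinor norm of $g=\sigma_{w_1}\cdots\sigma_{w_m}\in\operatorname{O}(L_1\otimes\mathbb{R})$ is $\prod_i(-(w_i,w_i)/2)\in\mathbb{R}^*/(\mathbb{R}^* )^2$, and $\operatorname{O}^+(L_1)$ is the subgroup of $\operatorname{O}(L_1)$ of elements with real spinor norm $1$ (for this Lorentzian lattice, equivalently those preserving each component of the cone of positive vectors). *)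

theory Defs
  imports "HOL-Analysis.Analysis"
begin

text \<open>The lattice L1 = U + A2 is Z^4 (type int^4) with the Gram matrix of the paper;
the same formula defines the bilinear form on L1 (x) R = R^4.\<close>

definition bil :: "'a::comm_ring_1 ^ 4 \<Rightarrow> 'a ^ 4 \<Rightarrow> 'a" where
  "bil x y = x$1 * y$2 + x$2 * y$1 - 2 * x$3 * y$3 - x$3 * y$4 - x$4 * y$3 - 2 * x$4 * y$4"

definition vec4 :: "'a \<Rightarrow> 'a \<Rightarrow> 'a \<Rightarrow> 'a \<Rightarrow> 'a ^ 4" where
  "vec4 a b c d = (\<chi> i. if i = 1 then a else if i = 2 then b else if i = 3 then c else d)"

definition O_L1 :: "(int ^ 4 \<Rightarrow> int ^ 4) set" where
  "O_L1 = {g. bij g \<and> (\<forall>x y. g (x + y) = g x + g y) \<and> (\<forall>x y. bil (g x) (g y) = bil x y)}"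

definition reflR :: "real ^ 4 \<Rightarrow> real ^ 4 \<Rightarrow> real ^ 4" where
  "reflR w x = x - (2 * bil x w / bil w w) *s w"

definition realext :: "(int ^ 4 \<Rightarrow> int ^ 4) \<Rightarrow> real ^ 4 \<Rightarrow> real ^ 4" where
  "realext g x = (\<Sum>i\<in>UNIV. x$i *s (\<chi> j. real_of_int (g (axis i 1) $ j)))"

text \<open>Real spinor norm 1: g = sigma_{w1} ... sigma_{wm} over R with
  prod (-(w_i,w_i)/2) a positive real (i.e. trivial in R^*/(R^*)^2).\<close>
definition spinor_norm_one :: "(int ^ 4 \<Rightarrow> int ^ 4) \<Rightarrow> bool" where
  "spinor_norm_one g \<longleftrightarrow> (\<exists>ws. (\<forall>w\<in>set ws. bil w w \<noteq> 0)
      \<and> realext g = foldr (\<lambda>w f. reflR w \<circ> f) ws id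
      \<and> (\<Prod>w\<leftarrow>ws. - bil w w / 2) > 0)"

definition O_plus_L1 :: "(int ^ 4 \<Rightarrow> int ^ 4) set" where
  "O_plus_L1 = {g \<in> O_L1. spinor_norm_one g}"

text \<open>Reflection sigma_w on L1 for a vector w of L1 with (w,w) dividing 2(x,w) for all x
  (true for the v_i below, which have norm -2); the division is then exact.\<close>
definition refl_int :: "int ^ 4 \<Rightarrow> int ^ 4 \<Rightarrow> int ^ 4" where
  "refl_int w x = x - ((2 * bil x w) div (bil w w)) *s w"

inductive_set gen_group :: "('a \<Rightarrow> 'a) set \<Rightarrow> ('a \<Rightarrow> 'a) set" for S where
  gen_id: "id \<in> gen_group S"
| gen_base: "g \<in> S \<Longrightarrow> g \<in> gen_group S"
| gen_comp: "f \<in> gen_group S \<Longrightarrow> g \<in> gen_group S \<Longrightarrow> f \<circ> g \<in> gen_group S"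
| gen_inv: "f \<in> gen_group S \<Longrightarrow> inv f \<in> gen_group S"

definition v1 :: "int ^ 4" where "v1 = vec4 1 (-1) 0 0"
definition v2 :: "int ^ 4" where "v2 = vec4 0 0 (-1) 0"
definition v3 :: "int ^ 4" where "v3 = vec4 0 0 0 1"
definition v4 :: "int ^ 4" where "v4 = vec4 0 1 1 (-1)"

definition swap_iso :: "int ^ 4 \<Rightarrow> int ^ 4" where
  "swap_iso x = vec4 (x$1) (x$2) (- x$4) (- x$3)"

end

theory Submission
  imports Defs
begin


lemma vec4_nth[simp]: "vec4 a b c d $ 1 = a" "vec4 a b c d $ 2 = b" "vec4 a b c d $ 3 = c" "vec4 a b c d $ 4 = d"
  by (simp_all add: vec4_def)
lemma vec4_eq: "(x::'a^4) = y \<longleftrightarrow> x$1 = y$1 \<and> x$2=y$2 \<and> x$3=y$3 \<and> x$4=y$4"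
  by (auto simp: vec_eq_iff forall_4)

lemma bil_sym: "bil x y = bil y x"
  by (simp add: bil_def algebra_simps)
lemma bil_add_left: "bil (x + y) z = bil x z + bil y z"
  by (simp add: bil_def algebra_simps)
lemma bil_add_right: "bil z (x + y) = bil z x + bil z y"
  by (simp add: bil_def algebra_simps)
lemma bil_diff_left: "bil (x - y) z = bil x z - bil y z"
  by (simp add: bil_def algebra_simps)
lemma bil_diff_right: "bil z (x - y) = bil z x - bil z y"
  by (simp add: bil_def algebra_simps)
lemma bil_scale_left: "bil (c *s x) z = c * bil x z"
  by (simp add: bil_def algebra_simps)
lemma bil_scale_right: "bil z (c *s x) = c * bil z x"
  by (simp add: bil_def algebra_simps)
lemma bil_neg_left: "bil (- x) z = - bil x z"
  by (simp add: bil_def algebra_simps)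
lemma bil_neg_right: "bil z (- x) = - bil z x"
  by (simp add: bil_def algebra_simps)
lemmas bil_lin = bil_add_left bil_add_right bil_diff_left bil_diff_right bil_scale_left bil_scale_right
  bil_neg_left bil_neg_right

definition rho :: "int ^ 4" where "rho = vec4 3 4 1 (-1)"

lemma bil_vec4: "bil (vec4 a b c d) (vec4 a' b' c' d') = a*b' + b*a' - 2*c*c' - c*d' - d*c' - 2*d*d'"
  by (simp add: bil_def)

lemma bil_v_x: 
  "bil x v1 = x$2 - x$1" "bil x v2 = 2*x$3 + x$4" "bil x v3 = - x$3 - 2*x$4" "bil x v4 = x$1 - x$3 + x$4"
  "bil x rho = 4*x$1 + 3*x$2 - x$3 + x$4"
  by (simp_all add: bil_def v1_def v2_def v3_def v4_def rho_def)

lemma vs_comp[simp]: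
  "v1$1 = 1" "v1$2 = -1" "v1$3 = 0" "v1$4 = 0"
  "v2$1 = 0" "v2$2 = 0" "v2$3 = -1" "v2$4 = 0"
  "v3$1 = 0" "v3$2 = 0" "v3$3 = 0" "v3$4 = 1"
  "v4$1 = 0" "v4$2 = 1" "v4$3 = 1" "v4$4 = -1"
  "rho$1 = 3" "rho$2 = 4" "rho$3 = 1" "rho$4 = -1"
  by (simp_all add: v1_def v2_def v3_def v4_def rho_def)

lemma refl_v:
  assumes "v \<in> {v1,v2,v3,v4}" shows "refl_int v x = x + bil x v *s v"
proof -
  have n: "bil v v = -2" using assms by (auto simp: bil_v_x)
  have "(2 * bil x v) div (bil v v) = - bil x v" unfolding n by simp
  then show ?thesis by (simp add: refl_int_def vec_eq_iff)
qed

definition zlin :: "(int^4 \<Rightarrow> int^4) \<Rightarrow> bool" where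
  "zlin g \<longleftrightarrow> (\<forall>x y. g (x + y) = g x + g y)"

lemma zlin_0: "zlin g \<Longrightarrow> g 0 = 0"
  unfolding zlin_def by (metis add_0 add_cancel_right_right)
lemma zlin_neg: "zlin g \<Longrightarrow> g (- x) = - g x"
  unfolding zlin_def by (metis add.right_inverse add_eq_0_iff zlin_0 zlin_def)
lemma zlin_diff: "zlin g \<Longrightarrow> g (x - y) = g x - g y"
  by (metis diff_conv_add_uminus zlin_def zlin_neg)
lemma zlin_nat: "zlin g \<Longrightarrow> g (of_nat n *s x) = of_nat n *s g x"
proof (induction n)
  case 0 then show ?case by (simp add: zlin_0)
next
  case (Suc n)
  have "of_nat (Suc n) *s x = of_nat n *s x + x" by (simp add: vector_sadd_rdistrib)
  then show ?case using Suc unfolding zlin_def by (simp add: vector_sadd_rdistrib)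
qed
lemma zlin_scale: "zlin g \<Longrightarrow> g (k *s x) = k *s g x"
proof (cases "k \<ge> 0")
  case True
  assume z: "zlin g"
  then show ?thesis using zlin_nat[OF z, of "nat k" x] True by simp
next
  case False
  assume z: "zlin g"
  have e: "k *s x = - (of_nat (nat (-k)) *s x)" using False by (simp add: vec_eq_iff)
  have "g (k *s x) = - (of_nat (nat (-k)) *s g x)" unfolding e zlin_neg[OF z] zlin_nat[OF z] ..
  also have "\<dots> = k *s g x" using False by (simp add: vec_eq_iff)
  finally show ?thesis .
qed
lemma zlin_expand: "zlin g \<Longrightarrow> g x = (\<Sum>i\<in>UNIV. x$i *s g (axis i 1))"
proof -
  assume z: "zlin g"
  have "g x = g (\<Sum>i\<in>UNIV. x$i *s axis i 1)" by (simp add: basis_expansion)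
  also have "\<dots> = (\<Sum>i\<in>UNIV. x$i *s g (axis i 1))"
    unfolding sum_4 using z by (simp add: zlin_def zlin_scale[OF z])
  finally show ?thesis .
qed




definition rv :: "int^4 \<Rightarrow> real^4" where "rv x = (\<chi> i. real_of_int (x$i))"
lemma rv_nth[simp]: "rv x $ i = real_of_int (x$i)" by (simp add: rv_def)

lemma realext_nth: "realext g x $ k = (\<Sum>i\<in>UNIV. x$i * real_of_int (g (axis i 1) $ k))"
  by (simp add: realext_def sum_component)

lemma zlin_nth: "zlin g \<Longrightarrow> g y $ k = (\<Sum>i\<in>UNIV. y$i * g (axis i 1) $ k)"
  by (subst zlin_expand, assumption) (simp add: sum_component)

lemma realext_rv: "zlin g \<Longrightarrow> realext g (rv y) = rv (g y)"
  by (simp add: vec_eq_iff realext_nth zlin_nth[of g y])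

lemma realext_lin: "realext g (x + y) = realext g x + realext g y"
  "realext g (c *s x) = c *s realext g x"
  by (simp_all add: vec4_eq realext_nth sum_4 algebra_simps)

lemma realext_comp: assumes "zlin f" "zlin g" shows "realext (f \<circ> g) = realext f \<circ> realext g"
proof
  fix x
  have "realext (f \<circ> g) x $ k = (realext f \<circ> realext g) x $ k" for k
  proof -
    have "realext (f \<circ> g) x $ k = (\<Sum>i\<in>UNIV. x$i * (\<Sum>j\<in>UNIV. real_of_int (g (axis i 1) $ j) * real_of_int (f (axis j 1) $ k)))"
      by (simp add: realext_nth zlin_nth[OF assms(1), of "g _"])
    also have "\<dots> = (\<Sum>i\<in>UNIV. \<Sum>j\<in>UNIV. x$i * real_of_int (g (axis i 1) $ j) * real_of_int (f (axis j 1) $ k))"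
      by (simp add: sum_distrib_left mult.assoc)
    also have "\<dots> = (\<Sum>j\<in>UNIV. \<Sum>i\<in>UNIV. x$i * real_of_int (g (axis i 1) $ j) * real_of_int (f (axis j 1) $ k))"
      by (rule sum.swap)
    also have "\<dots> = (\<Sum>j\<in>UNIV. (\<Sum>i\<in>UNIV. x$i * real_of_int (g (axis i 1) $ j)) * real_of_int (f (axis j 1) $ k))"
      by (simp add: sum_distrib_right)
    also have "\<dots> = (realext f \<circ> realext g) x $ k"
      by (simp add: realext_nth)
    finally show ?thesis .
  qed
  then show "realext (f \<circ> g) x = (realext f \<circ> realext g) x" by (simp add: vec_eq_iff)
qed

lemma realext_id: "realext id = id"
  by (auto simp: fun_eq_iff vec4_eq realext_nth sum_4 axis_def)

lemma bil_rv: "bil (rv x) (rv y) = real_of_int (bil x y)"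
  by (simp add: bil_def)

lemma reflR_invol: assumes "bil w w \<noteq> 0" shows "reflR w (reflR w x) = x"
proof -
  have "bil (reflR w x) w = - bil x w" unfolding reflR_def using assms by (simp add: bil_lin)
  then show ?thesis unfolding reflR_def[of w "reflR w x"] by (simp add: reflR_def vec_eq_iff algebra_simps)
qed

lemma zlin_refl: "v \<in> {v1,v2,v3,v4} \<Longrightarrow> zlin (refl_int v)"
  unfolding zlin_def refl_v by (simp add: bil_lin vec_eq_iff algebra_simps)

lemma realext_refl: assumes "v \<in> {v1,v2,v3,v4}" shows "realext (refl_int v) = reflR (rv v)"
proof
  fix x
  have n: "bil (rv v) (rv v) = -2" using assms by (auto simp: bil_rv bil_v_x)
  show "realext (refl_int v) x = reflR (rv v) x"
    unfolding reflR_def n using assms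
    by (auto simp: vec4_eq realext_nth sum_4 refl_v bil_def axis_def field_simps)
qed

definition w_sw :: "real^4" where "w_sw = vec4 0 0 1 1"

lemma realext_swap: "realext swap_iso = reflR w_sw"
proof
  fix x
  have n: "bil w_sw w_sw = -6" by (simp add: w_sw_def bil_def)
  show "realext swap_iso x = reflR w_sw x"
    unfolding reflR_def n 
    by (auto simp: vec4_eq realext_nth sum_4 bil_def axis_def swap_iso_def w_sw_def field_simps)
qed



lemma O_L1_zlin: "g \<in> O_L1 \<Longrightarrow> zlin g" by (simp add: O_L1_def zlin_def)
lemma O_L1_bij: "g \<in> O_L1 \<Longrightarrow> bij g" by (simp add: O_L1_def)
lemma O_L1_bil: "g \<in> O_L1 \<Longrightarrow> bil (g x) (g y) = bil x y" by (simp add: O_L1_def)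

lemma O_L1_id: "id \<in> O_L1" by (simp add: O_L1_def)
lemma O_L1_comp: "f \<in> O_L1 \<Longrightarrow> g \<in> O_L1 \<Longrightarrow> f \<circ> g \<in> O_L1"
  by (simp add: O_L1_def bij_comp)
lemma O_L1_inv: assumes "g \<in> O_L1" shows "inv g \<in> O_L1"
proof -
  have b: "bij g" using assms by (simp add: O_L1_def)
  have s: "g (inv g x) = x" for x using b by (simp add: bij_is_surj surj_f_inv_f)
  have i: "inv g (g x) = x" for x using b by (simp add: bij_is_inj inv_f_f)
  have "inv g (x + y) = inv g x + inv g y" for x y
  proof -
    have "g (inv g x + inv g y) = x + y" using assms s by (simp add: O_L1_def)
    then show ?thesis using i by metis
  qed
  moreover have "bil (inv g x) (inv g y) = bil x y" for x y
    using O_L1_bil[OF assms, of "inv g x" "inv g y"] s by simp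
  ultimately show ?thesis using b by (simp add: O_L1_def bij_imp_bij_inv)
qed

lemma vnorm: "v \<in> {v1,v2,v3,v4} \<Longrightarrow> bil v v = -2"
  by (auto simp: bil_v_x)

lemma refl_invol: assumes "v \<in> {v1,v2,v3,v4}" shows "refl_int v (refl_int v x) = x"
  by (simp add: refl_v[OF assms] bil_lin vnorm[OF assms] vec_eq_iff algebra_simps)

lemma refl_O: assumes "v \<in> {v1,v2,v3,v4}" shows "refl_int v \<in> O_L1"
proof -
  have "bij (refl_int v)" by (rule o_bij[where g="refl_int v"]) (simp_all add: fun_eq_iff refl_invol[OF assms])
  moreover have "bil (refl_int v x) (refl_int v y) = bil x y" for x y
    by (simp add: refl_v[OF assms] bil_lin vnorm[OF assms] bil_sym[of v x] bil_sym[of v y] algebra_simps)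
  ultimately show ?thesis using zlin_refl[OF assms] by (simp add: O_L1_def zlin_def)
qed

lemma swap_invol: "swap_iso (swap_iso x) = x" by (simp add: swap_iso_def vec4_eq)

lemma swap_O: "swap_iso \<in> O_L1"
proof -
  have "bij swap_iso" by (rule o_bij[where g="swap_iso"]) (simp_all add: fun_eq_iff swap_invol)
  moreover have "bil (swap_iso x) (swap_iso y) = bil x y" for x y
    by (simp add: swap_iso_def bil_def algebra_simps)
  moreover have "swap_iso (x + y) = swap_iso x + swap_iso y" for x y
    by (simp add: swap_iso_def vec4_eq)
  ultimately show ?thesis by (simp add: O_L1_def)
qed


definition FR :: "(real^4) list \<Rightarrow> real^4 \<Rightarrow> real^4" where
  "FR ws = foldr (\<lambda>w f. reflR w \<circ> f) ws id"

lemma FR_Cons: "FR (w # ws) = reflR w \<circ> FR ws" by (simp add: FR_def)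
lemma FR_Nil: "FR [] = id" by (simp add: FR_def)

lemma FR_append: "FR (a @ b) = FR a \<circ> FR b"
  by (induction a) (simp_all add: FR_Cons FR_Nil o_assoc)

lemma FR_rev: "\<forall>w\<in>set ws. bil w w \<noteq> 0 \<Longrightarrow> FR (rev ws) \<circ> FR ws = id"
proof (induction ws)
  case Nil then show ?case by (simp add: FR_def)
next
  case (Cons w ws)
  have e: "FR (rev (w#ws)) = FR (rev ws) \<circ> reflR w" by (simp add: FR_append FR_Cons FR_Nil)
  have "FR (rev (w#ws)) \<circ> FR (w#ws) = FR (rev ws) \<circ> (reflR w \<circ> reflR w) \<circ> FR ws"
    unfolding e FR_Cons by (simp add: o_assoc)
  also have "reflR w \<circ> reflR w = id" using Cons.prems reflR_invol by (auto simp: fun_eq_iff)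
  finally show ?case using Cons by (simp add: o_assoc)
qed

lemma prod_list_rev: "prod_list (rev (xs :: real list)) = prod_list xs"
  by (induction xs) (simp_all add: mult_ac)

lemma spinor_iff: "spinor_norm_one g \<longleftrightarrow> (\<exists>ws. (\<forall>w\<in>set ws. bil w w \<noteq> 0)
      \<and> realext g = FR ws \<and> (\<Prod>w\<leftarrow>ws. - bil w w / 2) > 0)"
  by (simp add: spinor_norm_one_def FR_def)

lemma Oplus_comp: assumes "f \<in> O_plus_L1" "g \<in> O_plus_L1" shows "f \<circ> g \<in> O_plus_L1"
proof -
  obtain a where a: "\<forall>w\<in>set a. bil w w \<noteq> 0" "realext f = FR a" "(\<Prod>w\<leftarrow>a. - bil w w / 2) > 0"
    using assms(1) by (auto simp: O_plus_L1_def spinor_iff)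
  obtain b where b: "\<forall>w\<in>set b. bil w w \<noteq> 0" "realext g = FR b" "(\<Prod>w\<leftarrow>b. - bil w w / 2) > 0"
    using assms(2) by (auto simp: O_plus_L1_def spinor_iff)
  have O: "f \<in> O_L1" "g \<in> O_L1" using assms by (auto simp: O_plus_L1_def)
  have "realext (f \<circ> g) = FR (a @ b)"
    using realext_comp[OF O_L1_zlin[OF O(1)] O_L1_zlin[OF O(2)]] a b by (simp add: FR_append)
  moreover have "(\<Prod>w\<leftarrow>a@b. - bil w w / 2) > 0" using a(3) b(3) by (simp add: mult_pos_pos)
  ultimately have "spinor_norm_one (f \<circ> g)" using a(1) b(1) unfolding spinor_iff
    by (intro exI[of _ "a@b"]) auto
  then show ?thesis using O_L1_comp[OF O] by (simp add: O_plus_L1_def)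
qed

lemma Oplus_inv: assumes "g \<in> O_plus_L1" shows "inv g \<in> O_plus_L1"
proof -
  obtain a where a: "\<forall>w\<in>set a. bil w w \<noteq> 0" "realext g = FR a" "(\<Prod>w\<leftarrow>a. - bil w w / 2) > 0"
    using assms(1) by (auto simp: O_plus_L1_def spinor_iff)
  have O: "g \<in> O_L1" using assms by (auto simp: O_plus_L1_def)
  have Oi: "inv g \<in> O_L1" using O_L1_inv[OF O] .
  have gi: "g \<circ> inv g = id" using O_L1_bij[OF O] by (metis bij_is_surj surj_iff)
  have e: "realext g \<circ> realext (inv g) = id"
    using realext_comp[OF O_L1_zlin[OF O] O_L1_zlin[OF Oi]] gi realext_id by simp
  have "realext (inv g) = FR (rev a) \<circ> FR a \<circ> realext (inv g)"
    using FR_rev[OF a(1)] by simp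
  also have "\<dots> = FR (rev a)" using e a(2) by (simp add: o_assoc[symmetric])
  finally have r: "realext (inv g) = FR (rev a)" .
  have "(\<Prod>w\<leftarrow>rev a. - bil w w / 2) > 0" using a(3) by (simp add: rev_map[symmetric] prod_list_rev)
  then have "spinor_norm_one (inv g)" using a(1) r unfolding spinor_iff
    by (intro exI[of _ "rev a"]) auto
  then show ?thesis using Oi by (simp add: O_plus_L1_def)
qed

lemma Oplus_id: "id \<in> O_plus_L1"
proof -
  have "spinor_norm_one id" unfolding spinor_iff
    by (intro exI[of _ "[]"]) (simp add: realext_id FR_def)
  then show ?thesis using O_L1_id by (simp add: O_plus_L1_def)
qed

lemma refl_Oplus: assumes "v \<in> {v1,v2,v3,v4}" shows "refl_int v \<in> O_plus_L1"
proof -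
  have n: "bil (rv v) (rv v) = -2" using assms by (auto simp: bil_rv bil_v_x)
  have "spinor_norm_one (refl_int v)" unfolding spinor_iff
    by (intro exI[of _ "[rv v]"]) (simp add: realext_refl[OF assms] n FR_def)
  then show ?thesis using refl_O[OF assms] by (simp add: O_plus_L1_def)
qed

lemma swap_Oplus: "swap_iso \<in> O_plus_L1"
proof -
  have n: "bil w_sw w_sw = -6" by (simp add: w_sw_def bil_def)
  have "spinor_norm_one swap_iso" unfolding spinor_iff
    by (intro exI[of _ "[w_sw]"]) (simp add: realext_swap n FR_def)
  then show ?thesis using swap_O by (simp add: O_plus_L1_def)
qed


lemma gen_sub: "gen_group {refl_int v1, refl_int v2, refl_int v3, refl_int v4, swap_iso} \<subseteq> O_plus_L1"
proof
  fix g assume "g \<in> gen_group {refl_int v1, refl_int v2, refl_int v3, refl_int v4, swap_iso}"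
  then show "g \<in> O_plus_L1"
  proof induction
    case gen_id show ?case by (rule Oplus_id)
  next
    case (gen_base g) then show ?case using refl_Oplus[of v1] refl_Oplus[of v2] refl_Oplus[of v3] refl_Oplus[of v4] swap_Oplus by auto
  next
    case (gen_comp f g) then show ?case using Oplus_comp by blast
  next
    case (gen_inv f) from gen_inv(2) show ?case by (rule Oplus_inv)
  qed
qed


lemma Q_nonneg: "(0::real) \<le> x3*x3 + x3*x4 + x4*x4"
proof -
  have h: "0 \<le> (x3+x4)*(x3+x4)" "0 \<le> x3*x3" "0 \<le> x4*x4" by simp_all
  have "(x3+x4)*(x3+x4) = x3*x3 + 2*(x3*x4) + x4*x4" by (simp add: algebra_simps)
  then show ?thesis using h by linarith
qed

lemma bil_self: "bil x x = 2 * (x$1 * x$2) - 2 * (x$3*x$3 + x$3*x$4 + x$4*x$4)"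
  by (simp add: bil_def algebra_simps)

lemma pos_12: fixes x :: "real^4" assumes "bil x x > 0" shows "x$1 * x$2 > 0"
  using assms Q_nonneg[of "x$3" "x$4"] unfolding bil_self by (smt (verit))

lemma pos_1: fixes x :: "real^4" assumes "bil x x > 0" shows "x$1 \<noteq> 0"
  using pos_12[OF assms] by auto

lemma lemP: fixes a b :: "real^4"
  assumes "bil a a > 0" "bil b b > 0" "a$1 > 0" "b$1 > 0" shows "bil a b > 0"
proof -
  define Qa where "Qa = 2*(a$3*a$3 + a$3*a$4 + a$4*a$4)"
  define Qb where "Qb = 2*(b$3*b$3 + b$3*b$4 + b$4*b$4)"
  define B where "B = 2*a$3*b$3 + a$3*b$4 + a$4*b$3 + 2*a$4*b$4"
  define S where "S = a$1*b$2 + a$2*b$1"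
  have e: "bil a b = S - B" by (simp add: bil_def S_def B_def algebra_simps)
  have qa: "Qa \<ge> 0" "Qb \<ge> 0" using Q_nonneg[of "a$3" "a$4"] Q_nonneg[of "b$3" "b$4"] unfolding Qa_def Qb_def by auto
  have ha: "2*(a$1*a$2) > Qa" using assms(1) unfolding bil_self Qa_def by linarith
  have hb: "2*(b$1*b$2) > Qb" using assms(2) unfolding bil_self Qb_def by linarith
  have a2: "a$2 > 0" using pos_12[OF assms(1)] assms(3) by (simp add: zero_less_mult_iff)
  have b2: "b$2 > 0" using pos_12[OF assms(2)] assms(4) by (simp add: zero_less_mult_iff)
  have Sp: "S > 0" unfolding S_def using a2 b2 assms(3,4) by (simp add: add_pos_pos)
  have cs: "B^2 \<le> Qa * Qb"
  proof -
    have "Qa * Qb - B^2 = 3 * (a$3*b$4 - a$4*b$3)^2"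
      unfolding Qa_def Qb_def B_def by (simp add: power2_eq_square algebra_simps)
    then show ?thesis by (smt (verit) zero_le_power2)
  qed
  have "Qa * Qb < (2*(a$1*a$2)) * (2*(b$1*b$2))"
    using ha hb qa by (smt (verit) mult_strict_mono')
  also have "\<dots> \<le> S^2"
  proof -
    have "S^2 - (2*(a$1*a$2)) * (2*(b$1*b$2)) = (a$1*b$2 - a$2*b$1)^2"
      unfolding S_def by (simp add: power2_eq_square algebra_simps)
    then show ?thesis by (smt (verit) zero_le_power2)
  qed
  finally have "B^2 < S^2" using cs by linarith
  then have "B < S" using Sp by (simp add: power2_less_imp_less)
  then show ?thesis using e by linarith
qed


lemma neq0_cases: "(x::real) \<noteq> 0 \<Longrightarrow> (x < 0 \<Longrightarrow> P) \<Longrightarrow> (x > 0 \<Longrightarrow> P) \<Longrightarrow> P"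
  by (metis linorder_neqE_linordered_idom)

lemma lemP': fixes a b :: "real^4"
  assumes "bil a a > 0" "bil b b > 0" shows "a$1 * b$1 * bil a b \<ge> 0"
proof -
  have a: "a$1 \<noteq> 0" and b: "b$1 \<noteq> 0" using pos_1 assms by auto
  have n: "bil (-a) (-a) = bil a a" "bil (-b) (-b) = bil b b" "bil (-a) b = - bil a b" "bil a (-b) = - bil a b"
    "bil (-a) (-b) = bil a b"
    by (simp_all add: bil_neg_left bil_neg_right)
  show ?thesis
  proof (rule neq0_cases[OF a])
    assume a1: "a$1 > 0"
    show ?thesis
    proof (rule neq0_cases[OF b])
      assume b1: "b$1 > 0"
      have "a$1 * b$1 > 0" using a1 b1 by (rule mult_pos_pos)
      moreover have "bil a b > 0" using lemP[OF assms a1 b1] .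
      ultimately show ?thesis by simp
    next
      assume b1: "b$1 < 0"
      then have "(-b)$1 > 0" by simp
      then have "bil a (-b) > 0" using lemP[of a "-b"] assms n a1 by simp
      then have "bil a b < 0" using n by simp
      moreover have "a$1 * b$1 < 0" using a1 b1 by (rule mult_pos_neg)
      ultimately show ?thesis by (simp add: mult_neg_neg less_imp_le)
    qed
  next
    assume a1: "a$1 < 0"
    then have a': "(-a)$1 > 0" by simp
    show ?thesis
    proof (rule neq0_cases[OF b])
      assume b1: "b$1 > 0"
      have "bil (-a) b > 0" using lemP[of "-a" b] assms n a' b1 by simp
      then have "bil a b < 0" using n by simp
      moreover have "a$1 * b$1 < 0" using a1 b1 by (rule mult_neg_pos)
      ultimately show ?thesis by (simp add: mult_neg_neg less_imp_le)
    next
      assume b1: "b$1 < 0"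
      then have "(-b)$1 > 0" by simp
      then have "bil (-a) (-b) > 0" using lemP[of "-a" "-b"] assms n a' by simp
      then have "bil a b > 0" using n by simp
      moreover have "a$1 * b$1 > 0" using a1 b1 by (rule mult_neg_neg)
      ultimately show ?thesis by simp
    qed
  qed
qed

lemma lemRCS: fixes x w :: "real^4" assumes "bil w w > 0" shows "bil x w ^ 2 \<ge> bil x x * bil w w"
proof (rule ccontr)
  assume "\<not> ?thesis"
  then have D: "bil x w ^ 2 - bil x x * bil w w < 0" by simp
  have w1: "w$1 \<noteq> 0" using pos_1[OF assms] .
  define t where "t = - x$1 / w$1"
  define y where "y = x + t *s w"
  have y1: "y$1 = 0" using w1 by (simp add: y_def t_def)
  have "bil y y * bil w w = (bil w w * t + bil x w)^2 - (bil x w ^ 2 - bil x x * bil w w)"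
    by (simp add: y_def bil_lin bil_sym[of w x] power2_eq_square algebra_simps)
  also have "\<dots> > 0" using D by (smt (verit) zero_le_power2)
  finally have "bil y y > 0" using assms by (simp add: zero_less_mult_iff)
  then show False using pos_12[of y] y1 by simp
qed

lemma sgn_help: fixes a b c :: real assumes "a \<noteq> 0" "b \<noteq> 0" "a*b*c \<ge> 0"
  shows "c > 0 \<Longrightarrow> a*b > 0" "c < 0 \<Longrightarrow> a*b < 0"
proof -
  have ab: "a*b \<noteq> 0" using assms by simp
  show "c > 0 \<Longrightarrow> a*b > 0"
  proof (rule ccontr)
    assume "c > 0" "\<not> a*b > 0"
    then have "a*b < 0" using ab by (metis linorder_neqE_linordered_idom)
    then have "a*b*c < 0" using \<open>c > 0\<close> by (rule mult_neg_pos)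
    then show False using assms(3) by simp
  qed
  show "c < 0 \<Longrightarrow> a*b < 0"
  proof (rule ccontr)
    assume "c < 0" "\<not> a*b < 0"
    then have "a*b > 0" using ab by (metis linorder_neqE_linordered_idom)
    then have "a*b*c < 0" using \<open>c < 0\<close> by (rule mult_pos_neg)
    then show False using assms(3) by simp
  qed
qed

lemma sign_refl: fixes z w :: "real^4"
  assumes z: "bil z z > 0" and w: "bil w w \<noteq> 0"
  shows "(reflR w z)$1 * z$1 * (- bil w w / 2) > 0" "bil (reflR w z) (reflR w z) = bil z z"
proof -
  show iso: "bil (reflR w z) (reflR w z) = bil z z"
    unfolding reflR_def using w by (simp add: bil_lin bil_sym[of w z] field_simps power2_eq_square)
  have ip: "bil z (reflR w z) = bil z z - 2 * bil z w ^ 2 / bil w w"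
    unfolding reflR_def by (simp add: bil_lin power2_eq_square)
  have z1: "z$1 \<noteq> 0" using pos_1[OF z] .
  have r1: "(reflR w z)$1 \<noteq> 0" using pos_1[of "reflR w z"] iso z by simp
  have P: "z$1 * (reflR w z)$1 * bil z (reflR w z) \<ge> 0" using lemP'[OF z] iso z by simp
  show "(reflR w z)$1 * z$1 * (- bil w w / 2) > 0"
  proof (cases "bil w w < 0")
    case True
    have "2 * bil z w ^ 2 / bil w w \<le> 0" using True by (simp add: divide_nonneg_neg)
    then have "bil z (reflR w z) > 0" using ip z by linarith
    then have "z$1 * (reflR w z)$1 > 0" using sgn_help(1)[OF z1 r1 P] by blast
    moreover have "- bil w w / 2 > 0" using True by simp
    ultimately have "(z$1 * (reflR w z)$1) * (- bil w w / 2) > 0" by (rule mult_pos_pos)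
    then show ?thesis by (simp only: mult.commute[of "z$1"])
  next
    case False
    then have wp: "bil w w > 0" using w by simp
    have "bil z w ^ 2 \<ge> bil z z * bil w w" using lemRCS[OF wp] .
    then have "bil z w ^ 2 / bil w w \<ge> bil z z" using wp by (simp add: pos_le_divide_eq)
    then have "bil z (reflR w z) < 0" using ip z by linarith
    then have "z$1 * (reflR w z)$1 < 0" using sgn_help(2)[OF z1 r1 P] by blast
    moreover have "- bil w w / 2 < 0" using wp by simp
    ultimately have "(z$1 * (reflR w z)$1) * (- bil w w / 2) > 0" by (rule mult_neg_neg)
    then show ?thesis by (simp only: mult.commute[of "z$1"])
  qed
qed

lemma FR_sign: assumes "\<forall>w\<in>set ws. bil w w \<noteq> 0" "bil x x > 0"
  shows "(FR ws x)$1 * x$1 * (\<Prod>w\<leftarrow>ws. - bil w w / 2) > 0 \<and> bil (FR ws x) (FR ws x) = bil x x"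
  using assms(1)
proof (induction ws)
  case Nil
  have "x$1 * x$1 > 0" using pos_1[OF assms(2)] by (rule neq0_cases) (simp_all add: mult_pos_pos mult_neg_neg)
  then show ?case by (simp add: FR_Nil)
next
  case (Cons w ws)
  let ?z = "FR ws x"
  have IH: "?z$1 * x$1 * (\<Prod>w\<leftarrow>ws. - bil w w / 2) > 0" "bil ?z ?z = bil x x" using Cons by auto
  have wn: "bil w w \<noteq> 0" using Cons.prems by simp
  have s: "(reflR w ?z)$1 * ?z$1 * (- bil w w / 2) > 0" "bil (reflR w ?z) (reflR w ?z) = bil ?z ?z"
    using sign_refl[OF _ wn, of ?z] IH assms(2) by auto
  have "0 < ((reflR w ?z)$1 * ?z$1 * (- bil w w / 2)) * (?z$1 * x$1 * (\<Prod>w\<leftarrow>ws. - bil w w / 2))"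
    by (rule mult_pos_pos[OF s(1) IH(1)])
  also have "\<dots> = (?z$1 * ?z$1) * ((reflR w ?z)$1 * x$1 * ((- bil w w / 2) * (\<Prod>w\<leftarrow>ws. - bil w w / 2)))"
    by (simp add: algebra_simps)
  finally have f: "0 < (?z$1 * ?z$1) * ((reflR w ?z)$1 * x$1 * ((- bil w w / 2) * (\<Prod>w\<leftarrow>ws. - bil w w / 2)))" .
  have zz: "?z$1 * ?z$1 > 0" using pos_1[of ?z] IH(2) assms(2)
    by (metis neq0_cases mult_pos_pos mult_neg_neg)
  have "0 < (reflR w ?z)$1 * x$1 * ((- bil w w / 2) * (\<Prod>w\<leftarrow>ws. - bil w w / 2))"
    using zero_less_mult_pos[OF f zz] .
  then show ?case using s IH by (simp add: FR_Cons)
qed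

lemma Oplus_pos: assumes "g \<in> O_plus_L1" shows "g rho $ 1 > 0"
proof -
  obtain a where a: "\<forall>w\<in>set a. bil w w \<noteq> 0" "realext g = FR a" "(\<Prod>w\<leftarrow>a. - bil w w / 2) > 0"
    using assms by (auto simp: O_plus_L1_def spinor_iff)
  have O: "g \<in> O_L1" using assms by (simp add: O_plus_L1_def)
  have r: "bil (rv rho) (rv rho) > 0" by (simp add: bil_rv rho_def bil_def)
  have "FR a (rv rho) = rv (g rho)" using realext_rv[OF O_L1_zlin[OF O]] a(2) by metis
  then have "real_of_int (g rho $ 1) * 3 * (\<Prod>w\<leftarrow>a. - bil w w / 2) > 0"
    using FR_sign[OF a(1) r] by simp
  then show ?thesis using a(3) by (simp add: zero_less_mult_iff)
qed


lemma sq_bound: fixes x k :: int assumes "x^2 \<le> N" "N < (k+1)^2" "0 \<le> k" shows "-k \<le> x" "x \<le> k"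
proof -
  have "x^2 < (k+1)^2" using assms(1,2) by (rule le_less_trans)
  then have "\<bar>x\<bar>^2 < (k+1)^2" by (simp only: power2_abs)
  moreover have "0 \<le> k+1" using assms(3) by simp
  ultimately have "\<bar>x\<bar> < k+1" by (rule power2_less_imp_less)
  then have "x < k+1" "- x < k+1" by (simp_all add: abs_less_iff)
  then show "-k \<le> x" "x \<le> k" by simp_all
qed

lemma roots_fin: fixes r1 r2 r3 r4 c :: int
  assumes N: "r1*r2 - (r3*r3+r3*r4+r4*r4) = -1" and l2: "3*r2 = c - 4*r1 + r3 - r4" and c: "c = 0 \<or> c = 1"
  and r1: "r1 = -1 \<or> r1 = 0 \<or> r1 = 1" and r3: "r3 = -1 \<or> r3 = 0 \<or> r3 = 1" and r4: "r4 = -1 \<or> r4 = 0 \<or> r4 = 1"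
  shows "c = 1 \<and> ((r1=1 \<and> r2=-1 \<and> r3=0 \<and> r4=0) \<or> (r1=0 \<and> r2=0 \<and> r3=-1 \<and> r4=0) \<or>
     (r1=0 \<and> r2=0 \<and> r3=0 \<and> r4=1) \<or> (r1=0 \<and> r2=1 \<and> r3=1 \<and> r4=-1))"
  using r1 r3 r4 c N l2
  apply (elim disjE)
  apply (simp_all)
  apply presburger+
  done

lemma roots_enum: fixes r1 r2 r3 r4 c :: int
  assumes N: "r1*r2 - (r3*r3+r3*r4+r4*r4) = -1" and L: "4*r1+3*r2-r3+r4 = c" and c: "c = 0 \<or> c = 1"
  shows "c = 1 \<and> ((r1=1 \<and> r2=-1 \<and> r3=0 \<and> r4=0) \<or> (r1=0 \<and> r2=0 \<and> r3=-1 \<and> r4=0) \<or>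
     (r1=0 \<and> r2=0 \<and> r3=0 \<and> r4=1) \<or> (r1=0 \<and> r2=1 \<and> r3=1 \<and> r4=-1))"
proof -
  define u where "u = 8*r1 - c - (r3-r4)"
  define d where "d = r3 - r4"
  define sv where "sv = r3 + r4"
  have id: "u^2 + 12*d^2 + 36* sv^2 - (c+d)^2 = -48*(r1*r2 - (r3*r3+r3*r4+r4*r4)) + 16*r1*(3*r2 - (c - 4*r1 + r3 - r4))"
    unfolding u_def d_def sv_def by (simp add: power2_eq_square algebra_simps)
  have l: "3*r2 - (c - 4*r1 + r3 - r4) = 0" using L by linarith
  have K: "u^2 + 12*d^2 + 36* sv^2 - (c+d)^2 = 48" using id N l by simp
  have cd: "(c+d)^2 \<le> 2 + 2*d^2"
  proof -
    have "0 \<le> (d-1)^2" by simp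
    then show ?thesis using c by (auto simp: power2_eq_square algebra_simps)
  qed
  have nn: "0 \<le> u^2" "0 \<le> d^2" "0 \<le> sv^2" by simp_all
  have "sv^2 \<le> 1" using K cd nn by linarith
  then have sb: "-1 \<le> sv" "sv \<le> 1" using sq_bound[where N=1 and k=1 and x=sv] by auto
  have "d^2 \<le> 5" using K cd nn by linarith
  then have db: "-2 \<le> d" "d \<le> 2" using sq_bound[where N=5 and k=2 and x=d] by auto
  have "u^2 \<le> 50" using K cd nn by linarith
  then have ub: "-7 \<le> u" "u \<le> 7" using sq_bound[where N=50 and k=7 and x=u] by auto
  have a3: "-3 \<le> 2*r3" using sb db unfolding sv_def d_def by arith
  have a3b: "2*r3 \<le> 3" using sb db unfolding sv_def d_def by arith
  have r3: "r3 = -1 \<or> r3 = 0 \<or> r3 = 1" using a3 a3b by presburger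
  have a4: "-3 \<le> 2*r4" using sb db unfolding sv_def d_def by arith
  have a4b: "2*r4 \<le> 3" using sb db unfolding sv_def d_def by arith
  have r4: "r4 = -1 \<or> r4 = 0 \<or> r4 = 1" using a4 a4b by presburger
  have a1: "-9 \<le> 8*r1" using ub db c unfolding u_def d_def by arith
  have a1b: "8*r1 \<le> 10" using ub db c unfolding u_def d_def by arith
  have r1: "r1 = -1 \<or> r1 = 0 \<or> r1 = 1" using a1 a1b by presburger
  have l2: "3*r2 = c - 4*r1 + r3 - r4" using L by linarith
  show ?thesis using roots_fin[OF N l2 c r1 r3 r4] .
qed

lemma chamber_enum: fixes y1 y2 y3 y4 :: int
  assumes N: "y1*y2 - (y3*y3+y3*y4+y4*y4) = 11" and h: "y2 - y1 \<ge> 1" "2*y3+y4 \<ge> 1" "-y3-2*y4 \<ge> 1" "y1-y3+y4 \<ge> 1"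
  shows "y1=3 \<and> y2=4 \<and> y3=1 \<and> y4=-1"
proof -
  define A where "A = y2-y1-1"
  define B where "B = 2*y3+y4-1"
  define C where "C = -y3-2*y4-1"
  define D where "D = y1-y3+y4-1"
  have nn: "A \<ge> 0" "B \<ge> 0" "C \<ge> 0" "D \<ge> 0" using h unfolding A_def B_def C_def D_def by simp_all
  have id: "6*(y1*y2 - (y3*y3+y3*y4+y4*y4)) - 66 = 36*B+36*C+42*D+18*A+4*(B*B)+10*(B*C)+4*(C*C)+6*(D*D)+12*(B*D)+12*(C*D)+6*((B+C+D)*A)"
    unfolding A_def B_def C_def D_def by (simp add: algebra_simps)
  have q: "0 \<le> B*B" "0 \<le> B*C" "0 \<le> C*C" "0 \<le> D*D" "0 \<le> B*D" "0 \<le> C*D" "0 \<le> (B+C+D)*A"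
    using nn by simp_all
  have z: "36*B+36*C+42*D+18*A+4*(B*B)+10*(B*C)+4*(C*C)+6*(D*D)+12*(B*D)+12*(C*D)+6*((B+C+D)*A) = 0"
    using id N by simp
  have "A = 0" "B = 0" "C = 0" "D = 0" using z q nn by linarith+
  then show ?thesis unfolding A_def B_def C_def D_def by arith
qed


lemma rv1: "rv x $ 1 = real_of_int (x$1)" by simp

lemma int_lemP: fixes a b :: "int^4"
  assumes "bil a a > 0" "bil b b > 0" "a$1 > 0" "b$1 > 0" shows "bil a b > 0"
proof -
  have 1: "bil (rv a) (rv a) > 0" using assms(1) unfolding bil_rv by simp
  have 2: "bil (rv b) (rv b) > 0" using assms(2) unfolding bil_rv by simp
  have 3: "(rv a)$1 > 0" "(rv b)$1 > 0" using assms(3,4) by simp_all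
  have "bil (rv a) (rv b) > 0" by (rule lemP[OF 1 2 3])
  then show ?thesis by (simp add: bil_rv)
qed

lemma int_same: fixes a b :: "int^4"
  assumes "bil a a > 0" "bil b b > 0" "bil a b > 0" "a$1 > 0" shows "b$1 > 0"
proof -
  have ra: "bil (rv a) (rv a) > 0" and rb: "bil (rv b) (rv b) > 0" using assms by (simp_all add: bil_rv)
  have p: "(rv a)$1 * (rv b)$1 * bil (rv a) (rv b) \<ge> 0" using lemP'[OF ra rb] .
  have "real_of_int (a$1 * b$1 * bil a b) \<ge> 0" using p by (simp add: bil_rv)
  then have p2: "a$1 * b$1 * bil a b \<ge> 0" by linarith
  have b0: "b$1 \<noteq> 0" using pos_1[OF rb] by simp
  show ?thesis
  proof (rule ccontr)
    assume "\<not> b$1 > 0"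
    then have "b$1 < 0" using b0 by simp
    then have "a$1 * b$1 < 0" using assms(4) by (simp add: mult_pos_neg)
    then have "a$1 * b$1 * bil a b < 0" using assms(3) by (simp add: mult_neg_pos)
    then show False using p2 by simp
  qed
qed

lemma bil_self_int: "bil (x::int^4) x = 2 * (x$1 * x$2 - (x$3*x$3 + x$3*x$4 + x$4*x$4))"
  by (simp add: bil_def algebra_simps)

lemma root_rho: fixes r :: "int^4" assumes "bil r r = -2" "bil r rho = 0 \<or> bil r rho = 1"
  shows "bil r rho = 1 \<and> r \<in> {v1,v2,v3,v4}"
proof -
  have N: "r$1 * r$2 - (r$3*r$3 + r$3*r$4 + r$4*r$4) = -1" using assms(1) unfolding bil_self_int by simp
  have L: "4*r$1 + 3*r$2 - r$3 + r$4 = bil r rho" by (simp add: bil_v_x)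
  have e: "bil r rho = 1 \<and> (r = v1 \<or> r = v2 \<or> r = v3 \<or> r = v4)"
    using roots_enum[OF N L assms(2)] unfolding vec4_eq[of r v1] vec4_eq[of r v2] vec4_eq[of r v3] vec4_eq[of r v4]
    by (simp only: vs_comp)
  then show ?thesis by simp
qed

lemma root_not_perp: assumes "bil r r = -2" shows "bil r rho \<noteq> 0"
proof
  assume "bil r rho = 0"
  then have "bil r rho = 1" using root_rho[OF assms] by blast
  then show False using \<open>bil r rho = 0\<close> by simp
qed

lemma root_rho1: assumes "bil r r = -2" "bil r rho = 1" shows "r \<in> {v1,v2,v3,v4}"
  using root_rho[OF assms(1)] assms(2) by blast

lemma chamber_rho: fixes y :: "int^4"
  assumes "bil y y = 22" "bil y v1 \<ge> 1" "bil y v2 \<ge> 1" "bil y v3 \<ge> 1" "bil y v4 \<ge> 1"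
  shows "y = rho"
proof -
  have N: "y$1 * y$2 - (y$3*y$3 + y$3*y$4 + y$4*y$4) = 11" using assms(1) unfolding bil_self_int by simp
  have h: "y$2 - y$1 \<ge> 1" "2*y$3+y$4 \<ge> 1" "-y$3-2*y$4 \<ge> 1" "y$1-y$3+y$4 \<ge> 1"
    using assms(2-5) unfolding bil_v_x by simp_all
  from chamber_enum[OF N h] show ?thesis unfolding vec4_eq[of y rho] vs_comp by simp
qed


abbreviation Gen :: "(int^4 \<Rightarrow> int^4) set" where
  "Gen \<equiv> gen_group {refl_int v1, refl_int v2, refl_int v3, refl_int v4, swap_iso}"

lemma Gen_O: "w \<in> Gen \<Longrightarrow> w \<in> O_L1"
  using gen_sub by (auto simp: O_plus_L1_def)

lemma gram:
  "bil v1 v1 = -2" "bil v1 v2 = 0" "bil v1 v3 = 0" "bil v1 v4 = 1"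
  "bil v2 v1 = 0" "bil v2 v2 = -2" "bil v2 v3 = 1" "bil v2 v4 = 1"
  "bil v3 v1 = 0" "bil v3 v2 = 1" "bil v3 v3 = -2" "bil v3 v4 = 1"
  "bil v4 v1 = 1" "bil v4 v2 = 1" "bil v4 v3 = 1" "bil v4 v4 = -2"
  "bil v1 rho = 1" "bil v2 rho = 1" "bil v3 rho = 1" "bil v4 rho = 1" "bil rho rho = 22"
  by (simp_all add: bil_v_x)

lemma v_rho: "v \<in> {v1,v2,v3,v4} \<Longrightarrow> bil v rho = 1"
  using gram by auto

lemma inv_apply: "g \<in> O_L1 \<Longrightarrow> g (inv g x) = x"
  using O_L1_bij by (simp add: bij_is_surj surj_f_inv_f)

lemma reduce_aux: "\<forall>h. h \<in> O_L1 \<longrightarrow> (h rho)$1 > 0 \<longrightarrow> nat (bil (h rho) rho) = n \<longrightarrow> (\<exists>w\<in>Gen. (w \<circ> h) rho = rho)"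
proof (induction n rule: less_induct)
  case (less n)
  show ?case
  proof (intro allI impI)
    fix h assume h: "h \<in> O_L1" "(h rho)$1 > 0" "nat (bil (h rho) rho) = n"
    define y where "y = h rho"
    have rr: "bil rho rho = 22" by (rule gram)
    have r1: "rho$1 > 0" by simp
    have n22: "bil y y = 22" unfolding y_def using O_L1_bil[OF h(1)] rr by simp
    have y1: "y$1 > 0" using h(2) by (simp add: y_def)
    have ypos: "bil y rho > 0" using int_lemP[OF _ _ y1 r1] n22 rr by simp
    have nz: "bil y v \<noteq> 0" if v: "v \<in> {v1,v2,v3,v4}" for v
    proof -
      define r where "r = inv h v"
      have hr: "h r = v" unfolding r_def using inv_apply[OF h(1)] .
      have "bil r r = bil (h r) (h r)" using O_L1_bil[OF h(1)] by simp
      also have "\<dots> = -2" using hr vnorm[OF v] by simp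
      finally have "bil r rho \<noteq> 0" by (rule root_not_perp)
      moreover have "bil y v = bil r rho"
        unfolding y_def using hr O_L1_bil[OF h(1), of rho r] bil_sym[of r rho] by simp
      ultimately show ?thesis by simp
    qed
    show "\<exists>w\<in>Gen. (w \<circ> h) rho = rho"
    proof (cases "\<forall>v\<in>{v1,v2,v3,v4}. bil y v > 0")
      case True
      then have "y = rho" using chamber_rho[OF n22] by simp
      then show ?thesis using gen_id by (intro bexI[of _ id]) (auto simp: y_def)
    next
      case False
      then obtain v where v: "v \<in> {v1,v2,v3,v4}" "bil y v \<le> 0" by (auto simp: not_less)
      then have neg: "bil y v < 0" using nz[OF v(1)] by simp
      define h' where "h' = refl_int v \<circ> h"
      have h'O: "h' \<in> O_L1" unfolding h'_def by (rule O_L1_comp[OF refl_O[OF v(1)] h(1)])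
      define y' where "y' = h' rho"
      have y'e: "y' = y + bil y v *s v" unfolding y'_def h'_def y_def by (simp add: refl_v[OF v(1)])
      have n22': "bil y' y' = 22" unfolding y'_def using O_L1_bil[OF h'O] rr by simp
      have yy': "bil y y' = 22 + bil y v * bil y v" unfolding y'e using n22 by (simp add: bil_lin)
      have "bil y y' > 0" unfolding yy' by (simp add: add_pos_nonneg)
      then have y'1: "y'$1 > 0" using int_same[of y y'] n22 n22' y1 by simp
      have y'pos: "bil y' rho > 0" using int_lemP[OF _ _ y'1 r1] n22' rr by simp
      have "bil y' rho = bil y rho + bil y v" unfolding y'e using v_rho[OF v(1)] by (simp add: bil_lin)
      then have lt: "nat (bil y' rho) < n" using h(3) neg y'pos ypos unfolding y_def by simp
      obtain w' where w': "w' \<in> Gen" "(w' \<circ> h') rho = rho"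
        using less.IH[OF lt] h'O y'1 unfolding y'_def by blast
      have wG: "w' \<circ> refl_int v \<in> Gen"
        using v(1) w'(1) by (auto intro: gen_comp gen_base)
      have "((w' \<circ> refl_int v) \<circ> h) rho = rho" using w'(2) unfolding h'_def by simp
      then show ?thesis using wG by blast
    qed
  qed
qed

lemma reduce: "h \<in> O_L1 \<Longrightarrow> (h rho)$1 > 0 \<Longrightarrow> \<exists>w\<in>Gen. (w \<circ> h) rho = rho"
  using reduce_aux by blast

lemma perm_enum:
  assumes "a \<in> {v1,v2,v3,v4}" "b \<in> {v1,v2,v3,v4}" "c \<in> {v1,v2,v3,v4}" "d \<in> {v1,v2,v3,v4}"
    "bil a b = 0" "bil a c = 0" "bil a d = 1" "bil b c = 1" "bil b d = 1" "bil c d = 1"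
  shows "(a = v1 \<and> b = v2 \<and> c = v3 \<and> d = v4) \<or> (a = v1 \<and> b = v3 \<and> c = v2 \<and> d = v4)"
  apply (insert assms)
  apply (elim insertE emptyE)
  apply (simp_all add: gram)
  done

lemma decomp: "x = x$1 *s v1 + (x$1+x$2-x$3) *s v2 + (x$1+x$2+x$4) *s v3 + (x$1+x$2) *s v4"
  by (simp add: vec4_eq algebra_simps)

lemma zlin_add: "zlin g \<Longrightarrow> g (x + y) = g x + g y" by (simp add: zlin_def)

lemma stab: assumes h: "h \<in> O_L1" "h rho = rho" shows "h = id \<or> h = swap_iso"
proof -
  have z: "zlin h" using O_L1_zlin[OF h(1)] .
  have hv: "h v \<in> {v1,v2,v3,v4}" if v: "v \<in> {v1,v2,v3,v4}" for v
  proof -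
    have "bil (h v) (h v) = -2" using O_L1_bil[OF h(1)] vnorm[OF v] by simp
    moreover have "bil (h v) rho = 1" using O_L1_bil[OF h(1), of v rho] h(2) v_rho[OF v] by simp
    ultimately show ?thesis by (rule root_rho1)
  qed
  have gb: "bil (h x) (h y) = bil x y" for x y using O_L1_bil[OF h(1)] .
  have P: "(h v1 = v1 \<and> h v2 = v2 \<and> h v3 = v3 \<and> h v4 = v4) \<or> (h v1 = v1 \<and> h v2 = v3 \<and> h v3 = v2 \<and> h v4 = v4)"
    by (rule perm_enum[OF hv hv hv hv]) (simp_all add: gb gram)
  have hx: "h x = x$1 *s h v1 + (x$1+x$2-x$3) *s h v2 + (x$1+x$2+x$4) *s h v3 + (x$1+x$2) *s h v4" for x
  proof -
    have "h x = h (x$1 *s v1 + (x$1+x$2-x$3) *s v2 + (x$1+x$2+x$4) *s v3 + (x$1+x$2) *s v4)"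
      using decomp[of x] by (rule arg_cong)
    then show ?thesis by (simp only: zlin_add[OF z] zlin_scale[OF z])
  qed
  from P show ?thesis
  proof
    assume a: "h v1 = v1 \<and> h v2 = v2 \<and> h v3 = v3 \<and> h v4 = v4"
    have "h x = x" for x using hx[of x] a decomp[of x] by simp
    then show ?thesis by (simp add: fun_eq_iff)
  next
    assume a: "h v1 = v1 \<and> h v2 = v3 \<and> h v3 = v2 \<and> h v4 = v4"
    have "h x = swap_iso x" for x using hx[of x] a by (simp add: swap_iso_def vec4_eq algebra_simps)
    then show ?thesis by (simp add: fun_eq_iff)
  qed
qed

theorem mainTheorem5:
  shows "O_plus_L1 = gen_group {refl_int v1, refl_int v2, refl_int v3, refl_int v4, swap_iso}"
proof
  show "gen_group {refl_int v1, refl_int v2, refl_int v3, refl_int v4, swap_iso} \<subseteq> O_plus_L1"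
    by (rule gen_sub)
next
  show "O_plus_L1 \<subseteq> gen_group {refl_int v1, refl_int v2, refl_int v3, refl_int v4, swap_iso}"
  proof
    fix g assume g: "g \<in> O_plus_L1"
    have gO: "g \<in> O_L1" using g by (simp add: O_plus_L1_def)
    obtain w where w: "w \<in> Gen" "(w \<circ> g) rho = rho" using reduce[OF gO Oplus_pos[OF g]] by blast
    have wO: "w \<in> O_L1" using Gen_O[OF w(1)] .
    have hO: "w \<circ> g \<in> O_L1" by (rule O_L1_comp[OF wO gO])
    have hG: "w \<circ> g \<in> Gen"
      using stab[OF hO w(2)]
    proof
      assume "w \<circ> g = id" then show ?thesis using gen_id by simp
    next
      assume e: "w \<circ> g = swap_iso"
      have "swap_iso \<in> Gen" by (rule gen_base) simp
      then show ?thesis using e by simp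
    qed
    have "inv w \<circ> (w \<circ> g) = g"
      using O_L1_bij[OF wO] by (simp add: fun_eq_iff bij_is_inj inv_f_f)
    moreover have "inv w \<circ> (w \<circ> g) \<in> Gen" by (rule gen_comp[OF gen_inv[OF w(1)] hG])
    ultimately show "g \<in> Gen" by simp
  qed
qed


end
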